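(* Let $X$ be a compact Hausdorff space, $(E,X,\pi)$ a bundle of complete metric spaces bounded by $k$, $\mu$ an ultrafilter on $X$ converging to $x$, and $f\in E_x$. For an open neighbourhood $W$ of $f$ let $A_W=\{(b_y)_{y\in X}\in\int_XE_y\,d\mu:\ \exists U\in\mu,\ \exists\epsilon>0,\ \coprod_{y\in U}B(b_y,\epsilon)\subseteq W\}$. Then each $A_W$ is nonempty, $A_W\cap A_{W'}=A_{W\cap W'}$, and the filter on $\int_XE_y\,d\mu$ generated by $\{A_W: W \text{ open neighbourhood of } f\}$ is a Cauchy filter; denote its limit by $\sigma_\mu(f)$. The resulting map $\sigma_\mu:E_x\to\int_XE_y\,d\mu$ is 1-Lipschitz.
   Context: Metric ultraproduct: for an ultrafilter $\mu$ on $X$ and complete metric spaces $E_y$ with distances $\le k$, $\int_XE_y\,d\mu=\prod_yE_y/\sim$ with $(a_y)\sim(b_y)$ iff $\lim_\mu d(a_y,b_y)=0$ and metric $\lim_\mu d(a_y,b_y)$; classes may be represented by families defined on a set of $\mu$; it is complete. $B(b,\epsilon)$ is the open ball in the fibre of $b$. Bundle definition: for a surjection $\pi:E\to X$ with metric fibres $E_x$, $E\times_XE$ has the subspace topology of $E\times E$, global distance $d(f,g)=d_{\pi(f)}(f,g)$; $V_\epsilon=\{f:\exists g\in V,\pi f=\pi g,d(f,g)<\epsilon\}$; $V\subseteq_\epsilon W$ means $V\subseteq V_\epsilon\subseteq W$. A bundle of complete metric spaces bounded by $k$ over $X$ is $(E,X,\pi)$ with all fibres complete with distances $\le k$ such that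 (1) $d:E\times_XE\to[0,k]$ is upper semicontinuous ($d^{-1}([0,r))$ open for all $r$); (2) $\pi$ is continuous and open; (3) for every open $W$ and $f\in W$ there are an open neighbourhood $V$ of $f$ and $\epsilon>0$ with $V\subseteq_\epsilon W$. *)

theory Defs
  imports "HOL-Analysis.Analysis"
begin

definition ultrafilter :: "'a filter \<Rightarrow> bool" where
  "ultrafilter F \<longleftrightarrow> F \<noteq> bot \<and> (\<forall>P. eventually P F \<or> eventually (\<lambda>x. \<not> P x) F)"

definition fibre :: "('e \<Rightarrow> 'x) \<Rightarrow> 'x \<Rightarrow> 'e set" where
  "fibre \<pi> y = \<pi> -` {y}"

definition thicken :: "('e \<Rightarrow> 'x) \<Rightarrow> ('e \<Rightarrow> 'e \<Rightarrow> real) \<Rightarrow> 'e set \<Rightarrow> real \<Rightarrow> 'e set" where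
  "thicken \<pi> d V \<epsilon> = {f. \<exists>g\<in>V. \<pi> f = \<pi> g \<and> d f g < \<epsilon>}"

text \<open>Bundle of complete metric spaces bounded by k over X (conditions (1)-(3)).
  The distance d is only meaningful on pairs in the same fibre.\<close>
definition metric_bundle :: "('e::topological_space \<Rightarrow> 'x::topological_space) \<Rightarrow> ('e \<Rightarrow> 'e \<Rightarrow> real) \<Rightarrow> real \<Rightarrow> bool" where
  "metric_bundle \<pi> d k \<longleftrightarrow>
     surj \<pi> \<and>
     (\<forall>y. Metric_space (fibre \<pi> y) d \<and> Metric_space.mcomplete (fibre \<pi> y) d) \<and>
     (\<forall>f g. \<pi> f = \<pi> g \<longrightarrow> d f g \<le> k) \<and>
     (\<forall>r. openin (top_of_set {(f, g). \<pi> f = \<pi> g}) {(f, g). \<pi> f = \<pi> g \<and> d f g < r}) \<and>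
     continuous_on UNIV \<pi> \<and> (\<forall>U. open U \<longrightarrow> open (\<pi> ` U)) \<and>
     (\<forall>W f. open W \<and> f \<in> W \<longrightarrow>
        (\<exists>V \<epsilon>. open V \<and> f \<in> V \<and> \<epsilon> > 0 \<and> V \<subseteq> thicken \<pi> d V \<epsilon> \<and> thicken \<pi> d V \<epsilon> \<subseteq> W))"

definition sections :: "('e \<Rightarrow> 'x) \<Rightarrow> ('x \<Rightarrow> 'e) set" where
  "sections \<pi> = {b. \<forall>y. \<pi> (b y) = y}"

definition ueq :: "('e \<Rightarrow> 'e \<Rightarrow> real) \<Rightarrow> 'x filter \<Rightarrow> ('x \<Rightarrow> 'e) \<Rightarrow> ('x \<Rightarrow> 'e) \<Rightarrow> bool" where
  "ueq d \<mu> a b \<longleftrightarrow> ((\<lambda>y. d (a y) (b y)) \<longlongrightarrow> 0) \<mu>"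

definition ultraprod :: "('e \<Rightarrow> 'x) \<Rightarrow> ('e \<Rightarrow> 'e \<Rightarrow> real) \<Rightarrow> 'x filter \<Rightarrow> ('x \<Rightarrow> 'e) set set" where
  "ultraprod \<pi> d \<mu> = {{c \<in> sections \<pi>. ueq d \<mu> b c} | b. b \<in> sections \<pi>}"

definition udist :: "('e \<Rightarrow> 'e \<Rightarrow> real) \<Rightarrow> 'x filter \<Rightarrow> ('x \<Rightarrow> 'e) set \<Rightarrow> ('x \<Rightarrow> 'e) set \<Rightarrow> real" where
  "udist d \<mu> p q = Lim \<mu> (\<lambda>y. d ((SOME b. b \<in> p) y) ((SOME c. c \<in> q) y))"

definition ball_union :: "('e \<Rightarrow> 'x) \<Rightarrow> ('e \<Rightarrow> 'e \<Rightarrow> real) \<Rightarrow> ('x \<Rightarrow> 'e) \<Rightarrow> 'x set \<Rightarrow> real \<Rightarrow> 'e set" where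
  "ball_union \<pi> d b U \<epsilon> = {e. \<pi> e \<in> U \<and> d (b (\<pi> e)) e < \<epsilon>}"

definition A_set :: "('e \<Rightarrow> 'x) \<Rightarrow> ('e \<Rightarrow> 'e \<Rightarrow> real) \<Rightarrow> 'x filter \<Rightarrow> 'e set \<Rightarrow> ('x \<Rightarrow> 'e) set set" where
  "A_set \<pi> d \<mu> W = {p \<in> ultraprod \<pi> d \<mu>. \<exists>b\<in>p. \<exists>U. eventually (\<lambda>y. y \<in> U) \<mu> \<and>
       (\<exists>\<epsilon>>0. ball_union \<pi> d b U \<epsilon> \<subseteq> W)}"

definition A_filter :: "('e::topological_space \<Rightarrow> 'x) \<Rightarrow> ('e \<Rightarrow> 'e \<Rightarrow> real) \<Rightarrow> 'x filter \<Rightarrow> 'e \<Rightarrow> ('x \<Rightarrow> 'e) set filter" where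
  "A_filter \<pi> d \<mu> f = (INF W\<in>{W. open W \<and> f \<in> W}. principal (A_set \<pi> d \<mu> W))"

definition cauchy_filter :: "('a \<Rightarrow> 'a \<Rightarrow> real) \<Rightarrow> 'a filter \<Rightarrow> bool" where
  "cauchy_filter dist' F \<longleftrightarrow> F \<noteq> bot \<and>
     (\<forall>\<epsilon>>0. \<exists>S. eventually (\<lambda>p. p \<in> S) F \<and> (\<forall>p\<in>S. \<forall>q\<in>S. dist' p q < \<epsilon>))"

definition converges_to :: "('a \<Rightarrow> 'a \<Rightarrow> real) \<Rightarrow> 'a filter \<Rightarrow> 'a \<Rightarrow> bool" where
  "converges_to dist' F a \<longleftrightarrow> (\<forall>\<epsilon>>0. eventually (\<lambda>p. dist' p a < \<epsilon>) F)"

end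

theory Submission
  imports Defs
begin


context
  fixes \<pi> :: "'e::topological_space \<Rightarrow> 'x::topological_space" and d :: "'e \<Rightarrow> 'e \<Rightarrow> real" and k :: real
  assumes mb: "metric_bundle \<pi> d k"
begin

lemma mbd: "surj \<pi> \<and>
     (\<forall>y. Metric_space (fibre \<pi> y) d \<and> Metric_space.mcomplete (fibre \<pi> y) d) \<and>
     (\<forall>f g. \<pi> f = \<pi> g \<longrightarrow> d f g \<le> k) \<and>
     (\<forall>r. openin (top_of_set {(f, g). \<pi> f = \<pi> g}) {(f, g). \<pi> f = \<pi> g \<and> d f g < r}) \<and>
     continuous_on UNIV \<pi> \<and> (\<forall>U. open U \<longrightarrow> open (\<pi> ` U)) \<and>
     (\<forall>W f. open W \<and> f \<in> W \<longrightarrow>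
        (\<exists>V \<epsilon>. open V \<and> f \<in> V \<and> \<epsilon> > 0 \<and> V \<subseteq> thicken \<pi> d V \<epsilon> \<and> thicken \<pi> d V \<epsilon> \<subseteq> W))"
  using mb unfolding metric_bundle_def .

lemma mb_ms: "Metric_space (fibre \<pi> y) d"
  using conjunct1[OF spec[OF conjunct1[OF conjunct2[OF mbd]]]] .

lemma mb_complete: "Metric_space.mcomplete (fibre \<pi> y) d"
  using conjunct2[OF spec[OF conjunct1[OF conjunct2[OF mbd]]]] .

lemma mb_nonneg: "0 \<le> d u v"
  by (rule Metric_space.nonneg[OF mb_ms])

lemma mb_commute: "d u v = d v u"
  by (rule Metric_space.commute[OF mb_ms])

lemma mb_zero: "d u u = 0"
proof -
  have "u \<in> fibre \<pi> (\<pi> u)" by (simp add: fibre_def)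
  then show ?thesis using Metric_space.zero[OF mb_ms[of "\<pi> u"], of u u] by blast
qed

lemma mb_tri: "\<pi> u = \<pi> v \<Longrightarrow> \<pi> v = \<pi> w \<Longrightarrow> d u w \<le> d u v + d v w"
proof -
  assume a: "\<pi> u = \<pi> v" "\<pi> v = \<pi> w"
  have "u \<in> fibre \<pi> (\<pi> u)" "v \<in> fibre \<pi> (\<pi> u)" "w \<in> fibre \<pi> (\<pi> u)" using a by (auto simp: fibre_def)
  then show ?thesis by (rule Metric_space.triangle[OF mb_ms])
qed

lemma mb_bound: "\<pi> u = \<pi> v \<Longrightarrow> d u v \<le> k"
  using conjunct1[OF conjunct2[OF conjunct2[OF mbd]]] by blast

lemma mb_surj: "surj \<pi>"
  using conjunct1[OF mbd] .

lemma mb_openmap: "open U \<Longrightarrow> open (\<pi> ` U)"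
  using conjunct1[OF conjunct2[OF conjunct2[OF conjunct2[OF conjunct2[OF conjunct2[OF mbd]]]]]] by blast

lemma mb_thick: "open W \<Longrightarrow> f \<in> W \<Longrightarrow>
   (\<exists>V \<epsilon>. open V \<and> f \<in> V \<and> \<epsilon> > 0 \<and> V \<subseteq> thicken \<pi> d V \<epsilon> \<and> thicken \<pi> d V \<epsilon> \<subseteq> W)"
  using conjunct2[OF conjunct2[OF conjunct2[OF conjunct2[OF conjunct2[OF conjunct2[OF mbd]]]]]] by blast

lemma mb_usc_open: "openin (top_of_set {(f, g). \<pi> f = \<pi> g}) {(f, g). \<pi> f = \<pi> g \<and> d f g < r}"
  using conjunct1[OF conjunct2[OF conjunct2[OF conjunct2[OF mbd]]]] by blast

lemma mb_usc:
  assumes "\<pi> g = \<pi> h" "d g h < r"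
  obtains W1 W2 where "open W1" "open W2" "g \<in> W1" "h \<in> W2"
    "\<And>u v. u \<in> W1 \<Longrightarrow> v \<in> W2 \<Longrightarrow> \<pi> u = \<pi> v \<Longrightarrow> d u v < r"
proof -
  obtain T where T: "open T" "{(f, g). \<pi> f = \<pi> g \<and> d f g < r} = {(f, g). \<pi> f = \<pi> g} \<inter> T"
    using mb_usc_open[of r] unfolding openin_open by blast
  have "(g,h) \<in> {(f, g). \<pi> f = \<pi> g \<and> d f g < r}" using assms by simp
  then have gh: "(g,h) \<in> T" unfolding T(2) by simp
  obtain A B where AB: "open A" "open B" "(g,h) \<in> A \<times> B" "A \<times> B \<subseteq> T"
    by (rule open_prod_elim[OF T(1) gh])
  show ?thesis
  proof (rule that[OF AB(1,2)])
    show "g \<in> A" "h \<in> B" using AB(3) by auto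
    fix u v assume uv: "u \<in> A" "v \<in> B" "\<pi> u = \<pi> v"
    then have "(u,v) \<in> T" using AB(4) by blast
    then have "(u,v) \<in> {(f, g). \<pi> f = \<pi> g} \<inter> T" using uv(3) by simp
    then have "(u,v) \<in> {(f, g). \<pi> f = \<pi> g \<and> d f g < r}" unfolding T(2) .
    then show "d u v < r" by simp
  qed
qed

lemma ultra_lim:
  fixes h :: "'x \<Rightarrow> real"
  assumes u: "ultrafilter \<mu>" and b: "\<And>y. 0 \<le> h y \<and> h y \<le> k"
  shows "\<exists>L. (h \<longlongrightarrow> L) \<mu>"
proof -
  let ?F = "filtermap h \<mu>"
  have nb: "?F \<noteq> bot" using u unfolding ultrafilter_def by (simp add: filtermap_bot_iff)
  have ev: "eventually (\<lambda>r. r \<in> {0..k}) ?F" using b by (simp add: eventually_filtermap)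
  obtain l where l: "inf (nhds l) ?F \<noteq> bot"
    using compact_filter[THEN iffD1, OF compact_Icc, rule_format, OF nb ev] by blast
  have "(h \<longlongrightarrow> l) \<mu>"
    unfolding tendsto_def
  proof (intro allI impI)
    fix S assume S: "open S" "l \<in> S"
    show "eventually (\<lambda>y. h y \<in> S) \<mu>"
    proof (rule ccontr)
      assume "\<not> eventually (\<lambda>y. h y \<in> S) \<mu>"
      then have e1: "eventually (\<lambda>r. r \<notin> S) ?F"
        using u unfolding ultrafilter_def by (auto simp: eventually_filtermap)
      have e2: "eventually (\<lambda>r. r \<in> S) (nhds l)" using S eventually_nhds by blast
      have "eventually (\<lambda>r. False) (inf (nhds l) ?F)"
        using eventually_inf[THEN iffD2, OF exI[of _ "\<lambda>r. r \<in> S"], OF exI[of _ "\<lambda>r. r \<notin> S"]] e1 e2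
        by blast
      then show False using l by (simp add: eventually_False)
    qed
  qed
  then show ?thesis by blast
qed

end

context
  fixes \<pi> :: "'e::topological_space \<Rightarrow> 'x::topological_space" and d :: "'e \<Rightarrow> 'e \<Rightarrow> real" and k :: real
    and \<mu> :: "'x filter"
  assumes mb: "metric_bundle \<pi> d k" and uf: "ultrafilter \<mu>"
begin

lemma nbot: "\<mu> \<noteq> bot" using uf unfolding ultrafilter_def by blast

lemma cls_mem: "b \<in> sections \<pi> \<Longrightarrow> {c \<in> sections \<pi>. ueq d \<mu> b c} \<in> ultraprod \<pi> d \<mu>"
  unfolding ultraprod_def by blast

lemma cls_self: "b \<in> sections \<pi> \<Longrightarrow> b \<in> {c \<in> sections \<pi>. ueq d \<mu> b c}"
  unfolding ueq_def using mb_zero[OF mb] by simp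

lemma up_sec: "p \<in> ultraprod \<pi> d \<mu> \<Longrightarrow> c \<in> p \<Longrightarrow> c \<in> sections \<pi>"
  unfolding ultraprod_def by blast

lemma up_close:
  assumes "p \<in> ultraprod \<pi> d \<mu>" "c \<in> p" "c' \<in> p" "\<epsilon> > 0"
  shows "eventually (\<lambda>y. d (c y) (c' y) < \<epsilon>) \<mu>"
proof -
  obtain b0 where b0: "b0 \<in> sections \<pi>" "p = {c \<in> sections \<pi>. ueq d \<mu> b0 c}"
    using assms(1) unfolding ultraprod_def by blast
  have t1: "((\<lambda>y. d (b0 y) (c y)) \<longlongrightarrow> 0) \<mu>" "((\<lambda>y. d (b0 y) (c' y)) \<longlongrightarrow> 0) \<mu>"
    and s: "c \<in> sections \<pi>" "c' \<in> sections \<pi>"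
    using assms b0 unfolding ueq_def by auto
  have e1: "eventually (\<lambda>y. d (b0 y) (c y) < \<epsilon>/2) \<mu>"
    using t1(1)[unfolded tendsto_iff, rule_format, of "\<epsilon>/2"] assms(4) mb_nonneg[OF mb]
    by (simp add: dist_real_def)
  have e2: "eventually (\<lambda>y. d (b0 y) (c' y) < \<epsilon>/2) \<mu>"
    using t1(2)[unfolded tendsto_iff, rule_format, of "\<epsilon>/2"] assms(4) mb_nonneg[OF mb]
    by (simp add: dist_real_def)
  show ?thesis
    using e1 e2
  proof eventually_elim
    case (elim y)
    have "\<pi> (c y) = \<pi> (b0 y)" "\<pi> (b0 y) = \<pi> (c' y)" using s b0(1) unfolding sections_def by auto
    then have "d (c y) (c' y) \<le> d (c y) (b0 y) + d (b0 y) (c' y)" by (rule mb_tri[OF mb])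
    then show ?case using elim mb_commute[OF mb, of "c y" "b0 y"] by linarith
  qed
qed

lemma lim_le:
  fixes h :: "'x \<Rightarrow> real"
  assumes L: "(h \<longlongrightarrow> L) \<mu>" and ev: "\<And>\<epsilon>. \<epsilon> > 0 \<Longrightarrow> eventually (\<lambda>y. h y \<le> r + \<epsilon>) \<mu>"
  shows "L \<le> r"
proof (rule field_le_epsilon)
  fix e :: real assume e: "0 < e"
  show "L \<le> r + e"
  proof (rule tendsto_upperbound[OF L])
    show "\<not> trivial_limit \<mu>" using nbot by simp
    show "\<forall>\<^sub>F i in \<mu>. h i \<le> r + e" by (rule ev[OF e])
  qed
qed

lemma tri3:
  assumes "\<pi> a = y" "\<pi> b = y" "\<pi> c = y" "\<pi> e = y"
  shows "d a e \<le> d a b + d b c + d c e"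
proof -
  have "d a e \<le> d a b + d b e" by (rule mb_tri[OF mb]) (use assms in simp_all)
  moreover have "d b e \<le> d b c + d c e" by (rule mb_tri[OF mb]) (use assms in simp_all)
  ultimately show ?thesis by simp
qed

lemma udist_le:
  assumes p: "p \<in> ultraprod \<pi> d \<mu>" and q: "q \<in> ultraprod \<pi> d \<mu>" and b: "b \<in> p" and c: "c \<in> q"
    and ev: "\<And>\<epsilon>. \<epsilon> > 0 \<Longrightarrow> eventually (\<lambda>y. d (b y) (c y) < r + \<epsilon>) \<mu>"
  shows "udist d \<mu> p q \<le> r"
proof -
  define rp where "rp = (SOME b. b \<in> p)"
  define rq where "rq = (SOME c. c \<in> q)"
  have rp: "rp \<in> p" unfolding rp_def by (rule someI[of "\<lambda>b. b \<in> p", OF b])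
  have rq: "rq \<in> q" unfolding rq_def by (rule someI[of "\<lambda>b. b \<in> q", OF c])
  have secs: "rp \<in> sections \<pi>" "rq \<in> sections \<pi>" "b \<in> sections \<pi>" "c \<in> sections \<pi>"
    using up_sec[OF p rp] up_sec[OF q rq] up_sec[OF p b] up_sec[OF q c] by auto
  have pe: "\<pi> (rp y) = y" "\<pi> (b y) = y" "\<pi> (c y) = y" "\<pi> (rq y) = y" for y
    using secs unfolding sections_def by simp_all
  define h where "h = (\<lambda>y. d (rp y) (rq y))"
  have hb: "0 \<le> h y \<and> h y \<le> k" for y
    unfolding h_def using mb_nonneg[OF mb, of "rp y" "rq y"] mb_bound[OF mb, of "rp y" "rq y"] pe[of y] by simp
  obtain L where L: "(h \<longlongrightarrow> L) \<mu>" using ultra_lim[OF mb uf, of h] hb by blast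
  have "udist d \<mu> p q = Lim \<mu> h" unfolding udist_def h_def rp_def rq_def by (rule refl)
  also have "\<dots> = L" by (rule tendsto_Lim[OF _ L]) (use nbot in simp)
  finally have ud: "udist d \<mu> p q = L" .
  have "L \<le> r"
  proof (rule lim_le[OF L])
    fix \<epsilon> :: real assume e: "\<epsilon> > 0"
    then have e3: "\<epsilon>/3 > 0" by simp
    have ev3: "eventually (\<lambda>y. d (rp y) (b y) < \<epsilon>/3 \<and> d (c y) (rq y) < \<epsilon>/3 \<and> d (b y) (c y) < r + \<epsilon>/3) \<mu>"
      apply (rule eventually_conj)
       apply (rule up_close[OF p rp b e3])
      apply (rule eventually_conj)
       apply (rule up_close[OF q c rq e3])
      apply (rule ev[OF e3])
      done
    show "eventually (\<lambda>y. h y \<le> r + \<epsilon>) \<mu>"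
    proof (rule eventually_mono[OF ev3])
      fix y assume a: "d (rp y) (b y) < \<epsilon>/3 \<and> d (c y) (rq y) < \<epsilon>/3 \<and> d (b y) (c y) < r + \<epsilon>/3"
      have "h y \<le> d (rp y) (b y) + d (b y) (c y) + d (c y) (rq y)"
        unfolding h_def by (rule tri3[OF pe])
      then show "h y \<le> r + \<epsilon>" using a by linarith
    qed
  qed
  then show ?thesis using ud by simp
qed

end



context
  fixes \<pi> :: "'e::topological_space \<Rightarrow> 'x::topological_space" and d :: "'e \<Rightarrow> 'e \<Rightarrow> real" and k :: real
    and \<mu> :: "'x filter" and x :: 'x
  assumes mb: "metric_bundle \<pi> d k" and uf: "ultrafilter \<mu>" and mux: "\<mu> \<le> nhds x"
begin

lemma sec_pi: "b \<in> sections \<pi> \<Longrightarrow> \<pi> (b y) = y"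
  unfolding sections_def by blast

lemma in_W_of_A:
  assumes "p \<in> A_set \<pi> d \<mu> W"
  shows "\<exists>c\<in>p. eventually (\<lambda>y. c y \<in> W) \<mu>"
proof -
  obtain b U \<epsilon> where b: "p \<in> ultraprod \<pi> d \<mu>" "b \<in> p" "eventually (\<lambda>y. y \<in> U) \<mu>" "\<epsilon> > 0"
     "ball_union \<pi> d b U \<epsilon> \<subseteq> W"
    using assms unfolding A_set_def by blast
  have bs: "b \<in> sections \<pi>" using up_sec[OF mb uf b(1,2)] .
  have "eventually (\<lambda>y. b y \<in> W) \<mu>"
    using b(3)
  proof eventually_elim
    case (elim y)
    have "b y \<in> ball_union \<pi> d b U \<epsilon>"
      unfolding ball_union_def using sec_pi[OF bs] elim b(4) mb_zero[OF mb] by simp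
    then show ?case using b(5) by blast
  qed
  then show ?thesis using b(2) by blast
qed

lemma sec_near:
  assumes W: "open W" "g \<in> W" and gx: "\<pi> g = x"
  shows "\<exists>c\<in>sections \<pi>. eventually (\<lambda>y. c y \<in> W) \<mu>"
proof -
  define c where "c = (\<lambda>y. if \<exists>e\<in>W. \<pi> e = y then SOME e. e \<in> W \<and> \<pi> e = y else SOME e. \<pi> e = y)"
  have c1: "c y \<in> W \<and> \<pi> (c y) = y" if "\<exists>e\<in>W. \<pi> e = y" for y
    using that unfolding c_def by (simp, metis (mono_tags, lifting) someI)
  have c2: "\<pi> (c y) = y" for y
  proof (cases "\<exists>e\<in>W. \<pi> e = y")
    case True then show ?thesis using c1 by blast
  next
    case False
    have "\<exists>e. \<pi> e = y" using mb_surj[OF mb] by (metis surjD)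
    then show ?thesis using False unfolding c_def by (simp, metis (mono_tags, lifting) someI)
  qed
  have "open (\<pi> ` W)" "x \<in> \<pi> ` W" using mb_openmap[OF mb W(1)] W(2) gx by auto
  then have "eventually (\<lambda>y. y \<in> \<pi> ` W) (nhds x)" using eventually_nhds by blast
  then have "eventually (\<lambda>y. y \<in> \<pi> ` W) \<mu>" using mux filter_leD by blast
  then have "eventually (\<lambda>y. c y \<in> W) \<mu>"
    by (rule eventually_mono) (use c1 in blast)
  moreover have "c \<in> sections \<pi>" unfolding sections_def using c2 by blast
  ultimately show ?thesis by blast
qed

lemma A_nonempty:
  assumes W: "open W" "g \<in> W" and gx: "\<pi> g = x"
  shows "A_set \<pi> d \<mu> W \<noteq> {}"
proof -
  obtain V \<epsilon> where V: "open V" "g \<in> V" "\<epsilon> > 0" "thicken \<pi> d V \<epsilon> \<subseteq> W"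
    using mb_thick[OF mb W] by blast
  obtain c where c: "c \<in> sections \<pi>" "eventually (\<lambda>y. c y \<in> V) \<mu>"
    using sec_near[OF V(1,2) gx] by blast
  have "ball_union \<pi> d c {y. c y \<in> V} \<epsilon> \<subseteq> W"
  proof
    fix e assume "e \<in> ball_union \<pi> d c {y. c y \<in> V} \<epsilon>"
    then have "c (\<pi> e) \<in> V" "d (c (\<pi> e)) e < \<epsilon>" unfolding ball_union_def by auto
    then have "e \<in> thicken \<pi> d V \<epsilon>"
      unfolding thicken_def using sec_pi[OF c(1), of "\<pi> e"] mb_commute[OF mb, of e "c (\<pi> e)"]
      by (metis (mono_tags, lifting) mem_Collect_eq)
    then show "e \<in> W" using V(4) by blast
  qed
  then have "{c' \<in> sections \<pi>. ueq d \<mu> c c'} \<in> A_set \<pi> d \<mu> W"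
    unfolding A_set_def mem_Collect_eq
    apply (intro conjI[OF cls_mem[OF mb uf c(1)]])
    apply (rule bexI[OF _ cls_self[OF mb uf c(1)]])
    apply (rule exI[of _ "{y. c y \<in> V}"])
    using c(2) V(3) by auto
  then show ?thesis by blast
qed

lemma A_mono: "W \<subseteq> W' \<Longrightarrow> A_set \<pi> d \<mu> W \<subseteq> A_set \<pi> d \<mu> W'"
  unfolding A_set_def by blast

lemma A_inter: "A_set \<pi> d \<mu> W \<inter> A_set \<pi> d \<mu> W' = A_set \<pi> d \<mu> (W \<inter> W')"
proof
  show "A_set \<pi> d \<mu> (W \<inter> W') \<subseteq> A_set \<pi> d \<mu> W \<inter> A_set \<pi> d \<mu> W'"
    using A_mono by (metis Int_lower1 Int_lower2 le_inf_iff)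
next
  show "A_set \<pi> d \<mu> W \<inter> A_set \<pi> d \<mu> W' \<subseteq> A_set \<pi> d \<mu> (W \<inter> W')"
  proof
    fix p assume "p \<in> A_set \<pi> d \<mu> W \<inter> A_set \<pi> d \<mu> W'"
    then obtain b U \<epsilon> b' U' \<epsilon>' where
      b: "p \<in> ultraprod \<pi> d \<mu>" "b \<in> p" "eventually (\<lambda>y. y \<in> U) \<mu>" "\<epsilon> > 0"
         "ball_union \<pi> d b U \<epsilon> \<subseteq> W" and
      b': "b' \<in> p" "eventually (\<lambda>y. y \<in> U') \<mu>" "\<epsilon>' > 0"
         "ball_union \<pi> d b' U' \<epsilon>' \<subseteq> W'"
      unfolding A_set_def by blast
    define \<delta> where "\<delta> = min \<epsilon> \<epsilon>' / 2"
    have \<delta>: "\<delta> > 0" "2 * \<delta> \<le> \<epsilon>" "2 * \<delta> \<le> \<epsilon>'" using b(4) b'(3) unfolding \<delta>_def by auto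
    define U'' where "U'' = {y. y \<in> U \<and> y \<in> U' \<and> d (b' y) (b y) < \<delta>}"
    have bs: "b \<in> sections \<pi>" "b' \<in> sections \<pi>" using up_sec[OF mb uf b(1)] b(2) b'(1) by auto
    have ev: "eventually (\<lambda>y. y \<in> U'') \<mu>"
      unfolding U''_def mem_Collect_eq
      by (intro eventually_conj b(3) b'(2) up_close[OF mb uf b(1) b'(1) b(2) \<delta>(1)])
    have "ball_union \<pi> d b U'' \<delta> \<subseteq> W \<inter> W'"
    proof
      fix e assume "e \<in> ball_union \<pi> d b U'' \<delta>"
      then have e: "\<pi> e \<in> U" "\<pi> e \<in> U'" "d (b' (\<pi> e)) (b (\<pi> e)) < \<delta>" "d (b (\<pi> e)) e < \<delta>"
        unfolding ball_union_def U''_def by auto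
      have "e \<in> ball_union \<pi> d b U \<epsilon>" unfolding ball_union_def using e \<delta> by auto
      moreover have "d (b' (\<pi> e)) e \<le> d (b' (\<pi> e)) (b (\<pi> e)) + d (b (\<pi> e)) e"
        using sec_pi[OF bs(1)] sec_pi[OF bs(2)] by (intro mb_tri[OF mb]) auto
      then have "e \<in> ball_union \<pi> d b' U' \<epsilon>'" unfolding ball_union_def using e \<delta> by auto
      ultimately show "e \<in> W \<inter> W'" using b(5) b'(4) by blast
    qed
    then show "p \<in> A_set \<pi> d \<mu> (W \<inter> W')"
      unfolding A_set_def using b(1,2) ev \<delta>(1) by blast
  qed
qed

lemma A_filter_ev:
  "eventually P (A_filter \<pi> d \<mu> g) \<longleftrightarrow> (\<exists>W. open W \<and> g \<in> W \<and> (\<forall>p\<in>A_set \<pi> d \<mu> W. P p))"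
  unfolding A_filter_def
proof (subst eventually_INF_base)
  show "{W. open W \<and> g \<in> W} \<noteq> {}" by auto
  fix a b assume "a \<in> {W. open W \<and> g \<in> W}" "b \<in> {W. open W \<and> g \<in> W}"
  then show "\<exists>x\<in>{W. open W \<and> g \<in> W}. principal (A_set \<pi> d \<mu> x) \<le> inf (principal (A_set \<pi> d \<mu> a)) (principal (A_set \<pi> d \<mu> b))"
    by (intro bexI[of _ "a \<inter> b"]) (auto simp: inf_principal A_inter)
qed (auto simp: eventually_principal)

lemma A_filter_nbot:
  assumes "\<pi> g = x" shows "A_filter \<pi> d \<mu> g \<noteq> bot"
proof
  assume "A_filter \<pi> d \<mu> g = bot"
  then have "eventually (\<lambda>p. False) (A_filter \<pi> d \<mu> g)" by simp
  then obtain W where "open W" "g \<in> W" "A_set \<pi> d \<mu> W = {}" unfolding A_filter_ev by blast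
  then show False using A_nonempty assms by blast
qed


definition tends where "tends b g \<longleftrightarrow> (\<forall>W. open W \<and> g \<in> W \<longrightarrow> eventually (\<lambda>y. b y \<in> W) \<mu>)"

lemma conv_sec:
  assumes gx: "\<pi> g = x" and bs: "b \<in> sections \<pi>" and bt: "tends b g"
  shows "converges_to (udist d \<mu>) (A_filter \<pi> d \<mu> g) {c \<in> sections \<pi>. ueq d \<mu> b c}"
  unfolding converges_to_def
proof (intro allI impI)
  fix \<epsilon> :: real assume e: "\<epsilon> > 0"
  obtain W1 W2 where W: "open W1" "open W2" "g \<in> W1" "g \<in> W2"
    "\<And>u v. u \<in> W1 \<Longrightarrow> v \<in> W2 \<Longrightarrow> \<pi> u = \<pi> v \<Longrightarrow> d u v < \<epsilon>/2"
  proof -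
    have dd: "d g g < \<epsilon>/2" using mb_zero[OF mb, of g] e by simp
    show ?thesis by (rule mb_usc[OF mb refl dd]) (rule that)
  qed
  have "\<forall>p\<in>A_set \<pi> d \<mu> (W1 \<inter> W2). udist d \<mu> p {c \<in> sections \<pi>. ueq d \<mu> b c} < \<epsilon>"
  proof
    fix p assume p: "p \<in> A_set \<pi> d \<mu> (W1 \<inter> W2)"
    obtain c where c: "c \<in> p" "eventually (\<lambda>y. c y \<in> W1 \<inter> W2) \<mu>" using in_W_of_A[OF p] by blast
    have pu: "p \<in> ultraprod \<pi> d \<mu>" using p unfolding A_set_def by blast
    have cs: "c \<in> sections \<pi>" using up_sec[OF mb uf pu c(1)] .
    have "udist d \<mu> p {c \<in> sections \<pi>. ueq d \<mu> b c} \<le> \<epsilon>/2"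
    proof (rule udist_le[OF mb uf pu cls_mem[OF mb uf bs] c(1) cls_self[OF mb uf bs]])
      fix e' :: real assume "e' > 0"
      have e1: "eventually (\<lambda>y. b y \<in> W1 \<inter> W2) \<mu>"
        using bt W(1-4) unfolding tends_def by blast
      show "eventually (\<lambda>y. d (c y) (b y) < \<epsilon>/2 + e') \<mu>"
      proof (rule eventually_elim2[OF e1 c(2)])
        fix y assume "b y \<in> W1 \<inter> W2" "c y \<in> W1 \<inter> W2"
        then have "d (c y) (b y) < \<epsilon>/2" using W(5) sec_pi[OF cs] sec_pi[OF bs] by auto
        then show "d (c y) (b y) < \<epsilon>/2 + e'" using \<open>e' > 0\<close> by linarith
      qed
    qed
    then show "udist d \<mu> p {c \<in> sections \<pi>. ueq d \<mu> b c} < \<epsilon>" using e by linarith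
  qed
  then show "eventually (\<lambda>p. udist d \<mu> p {c \<in> sections \<pi>. ueq d \<mu> b c} < \<epsilon>) (A_filter \<pi> d \<mu> g)"
    unfolding A_filter_ev using W by (intro exI[of _ "W1 \<inter> W2"]) auto
qed

lemma cauchy:
  assumes gx: "\<pi> g = x"
  shows "cauchy_filter (udist d \<mu>) (A_filter \<pi> d \<mu> g)"
  unfolding cauchy_filter_def
proof (intro conjI A_filter_nbot[OF gx] allI impI)
  fix \<epsilon> :: real assume e: "\<epsilon> > 0"
  obtain W1 W2 where W: "open W1" "open W2" "g \<in> W1" "g \<in> W2"
    "\<And>u v. u \<in> W1 \<Longrightarrow> v \<in> W2 \<Longrightarrow> \<pi> u = \<pi> v \<Longrightarrow> d u v < \<epsilon>/2"
  proof -
    have dd: "d g g < \<epsilon>/2" using mb_zero[OF mb, of g] e by simp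
    show ?thesis by (rule mb_usc[OF mb refl dd]) (rule that)
  qed
  have "\<forall>p\<in>A_set \<pi> d \<mu> (W1 \<inter> W2). \<forall>q\<in>A_set \<pi> d \<mu> (W1 \<inter> W2). udist d \<mu> p q < \<epsilon>"
  proof (intro ballI)
    fix p q assume p: "p \<in> A_set \<pi> d \<mu> (W1 \<inter> W2)" and q: "q \<in> A_set \<pi> d \<mu> (W1 \<inter> W2)"
    obtain c where c: "c \<in> p" "eventually (\<lambda>y. c y \<in> W1 \<inter> W2) \<mu>" using in_W_of_A[OF p] by blast
    obtain c' where c': "c' \<in> q" "eventually (\<lambda>y. c' y \<in> W1 \<inter> W2) \<mu>" using in_W_of_A[OF q] by blast
    have pu: "p \<in> ultraprod \<pi> d \<mu>" using p unfolding A_set_def by blast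
    have qu: "q \<in> ultraprod \<pi> d \<mu>" using q unfolding A_set_def by blast
    have cs: "c \<in> sections \<pi>" "c' \<in> sections \<pi>" using up_sec[OF mb uf pu c(1)] up_sec[OF mb uf qu c'(1)] by auto
    have "udist d \<mu> p q \<le> \<epsilon>/2"
    proof (rule udist_le[OF mb uf pu qu c(1) c'(1)])
      fix e' :: real assume "e' > 0"
      show "eventually (\<lambda>y. d (c y) (c' y) < \<epsilon>/2 + e') \<mu>"
      proof (rule eventually_elim2[OF c'(2) c(2)])
        fix y assume "c' y \<in> W1 \<inter> W2" "c y \<in> W1 \<inter> W2"
        then have "d (c y) (c' y) < \<epsilon>/2" using W(5) sec_pi[OF cs(1)] sec_pi[OF cs(2)] by auto
        then show "d (c y) (c' y) < \<epsilon>/2 + e'" using \<open>e' > 0\<close> by linarith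
      qed
    qed
    then show "udist d \<mu> p q < \<epsilon>" using e by linarith
  qed
  then show "\<exists>S. eventually (\<lambda>p. p \<in> S) (A_filter \<pi> d \<mu> g) \<and> (\<forall>p\<in>S. \<forall>q\<in>S. udist d \<mu> p q < \<epsilon>)"
    unfolding A_filter_ev using W by (intro exI[of _ "A_set \<pi> d \<mu> (W1 \<inter> W2)"] conjI exI[of _ "W1 \<inter> W2"]) auto
qed

lemma lip:
  assumes gh: "\<pi> g = \<pi> h" and bs: "b \<in> sections \<pi>" "b' \<in> sections \<pi>" and bt: "tends b g" "tends b' h"
  shows "udist d \<mu> {c \<in> sections \<pi>. ueq d \<mu> b c} {c \<in> sections \<pi>. ueq d \<mu> b' c} \<le> d g h"
proof (rule udist_le[OF mb uf cls_mem[OF mb uf bs(1)] cls_mem[OF mb uf bs(2)] cls_self[OF mb uf bs(1)] cls_self[OF mb uf bs(2)]])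
  fix e :: real assume e: "e > 0"
  obtain W1 W2 where W: "open W1" "open W2" "g \<in> W1" "h \<in> W2"
    "\<And>u v. u \<in> W1 \<Longrightarrow> v \<in> W2 \<Longrightarrow> \<pi> u = \<pi> v \<Longrightarrow> d u v < d g h + e"
  proof -
    have dd: "d g h < d g h + e" using e by simp
    show ?thesis by (rule mb_usc[OF mb gh dd]) (rule that)
  qed
  have e1: "eventually (\<lambda>y. b y \<in> W1) \<mu>" using bt(1) W(1,3) unfolding tends_def by blast
  have e2: "eventually (\<lambda>y. b' y \<in> W2) \<mu>" using bt(2) W(2,4) unfolding tends_def by blast
  show "eventually (\<lambda>y. d (b y) (b' y) < d g h + e) \<mu>"
  proof (rule eventually_elim2[OF e2 e1])
    fix y assume "b' y \<in> W2" "b y \<in> W1"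
    then show "d (b y) (b' y) < d g h + e" using W(5) sec_pi[OF bs(1)] sec_pi[OF bs(2)] by auto
  qed
qed


lemma exist_sec:
  assumes gx: "\<pi> g = x"
  shows "\<exists>b\<in>sections \<pi>. tends b g"
proof -
  have "\<forall>n. \<exists>G. open G \<and> g \<in> G \<and> (\<forall>u\<in>G. \<forall>v\<in>G. \<pi> u = \<pi> v \<longrightarrow> d u v < 1 / real (Suc n))"
  proof
    fix n
    obtain W1 W2 where W: "open W1" "open W2" "g \<in> W1" "g \<in> W2"
      "\<And>u v. u \<in> W1 \<Longrightarrow> v \<in> W2 \<Longrightarrow> \<pi> u = \<pi> v \<Longrightarrow> d u v < 1 / real (Suc n)"
    proof -
      have dd: "d g g < 1 / real (Suc n)" using mb_zero[OF mb, of g] by simp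
      show ?thesis by (rule mb_usc[OF mb refl dd]) (rule that)
    qed
    show "\<exists>G. open G \<and> g \<in> G \<and> (\<forall>u\<in>G. \<forall>v\<in>G. \<pi> u = \<pi> v \<longrightarrow> d u v < 1 / real (Suc n))"
      using W by (intro exI[of _ "W1 \<inter> W2"]) auto
  qed
  then have "\<exists>G. \<forall>n. open (G n) \<and> g \<in> G n \<and> (\<forall>u\<in>G n. \<forall>v\<in>G n. \<pi> u = \<pi> v \<longrightarrow> d u v < 1 / real (Suc n))"
    by (rule choice)
  then obtain G where G0: "\<forall>n. open (G n) \<and> g \<in> G n \<and> (\<forall>u\<in>G n. \<forall>v\<in>G n. \<pi> u = \<pi> v \<longrightarrow> d u v < 1 / real (Suc n))"
    by (elim exE)
  have G1: "open (G n)" for n using G0 by blast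
  have G2: "g \<in> G n" for n using G0 by blast
  have G3: "d u v < 1 / real (Suc n)" if "u \<in> G n" "v \<in> G n" "\<pi> u = \<pi> v" for n u v
    using G0 that by blast
  note G = G1 G2 G3
  define W where "W n = \<Inter> (G ` {..n})" for n
  have Wo: "open (W n)" for n unfolding W_def using G(1) by (intro open_INT) auto
  have Wg: "g \<in> W n" for n unfolding W_def using G(2) by auto
  have Wmono: "m \<le> n \<Longrightarrow> W n \<subseteq> W m" for m n unfolding W_def by auto
  have WG: "W n \<subseteq> G n" for n unfolding W_def by auto
  have "\<forall>n. \<exists>c. c \<in> sections \<pi> \<and> eventually (\<lambda>y. c y \<in> W n) \<mu>"
    using sec_near[OF Wo Wg gx] by blast
  then have "\<exists>c. \<forall>n. c n \<in> sections \<pi> \<and> eventually (\<lambda>y. c n y \<in> W n) \<mu>"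
    by (rule choice)
  then obtain c where c0: "\<forall>n. c n \<in> sections \<pi> \<and> eventually (\<lambda>y. c n y \<in> W n) \<mu>"
    by (elim exE)
  have c1: "c n \<in> sections \<pi>" for n using c0 by blast
  have c2: "eventually (\<lambda>y. c n y \<in> W n) \<mu>" for n using c0 by blast
  note c = c1 c2
  define U where "U n = {y. \<forall>m\<in>{..n}. c m y \<in> W m}" for n
  have Uev: "eventually (\<lambda>y. y \<in> U n) \<mu>" for n
    unfolding U_def mem_Collect_eq by (rule eventually_ball_finite) (use c(2) in auto)
  have Umono: "m \<le> n \<Longrightarrow> U n \<subseteq> U m" for m n unfolding U_def by auto
  have key: "d (c m y) (c m' y) < 1 / real (Suc m)" if "y \<in> U n" "m \<le> m'" "m' \<le> n" for y m m' n
  proof -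
    have "c m y \<in> W m" "c m' y \<in> W m'" using that unfolding U_def by auto
    then have "c m y \<in> G m" "c m' y \<in> G m" using WG Wmono[OF that(2)] by auto
    moreover have "\<pi> (c m y) = \<pi> (c m' y)" using sec_pi[OF c(1)] by simp
    ultimately show ?thesis by (rule G(3))
  qed
  have key2: "d (c m y) (c m' y) < 1 / real (Suc (min m m'))" if "y \<in> U n" "m \<le> n" "m' \<le> n" for y m m' n
  proof (cases "m \<le> m'")
    case True then show ?thesis using key[OF that(1) True that(3)] by (simp add: min_def)
  next
    case False then show ?thesis using key[OF that(1) _ that(2), of m'] mb_commute[OF mb, of "c m y"]
      by (simp add: min_def)
  qed
  define L where "L y = (SOME l. l \<in> fibre \<pi> y \<and> limitin (Metric_space.mtopology (fibre \<pi> y) d) (\<lambda>n. c n y) l sequentially)" for y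
  have Lprop: "L y \<in> fibre \<pi> y \<and> d (L y) (c n y) \<le> 1 / real (Suc n)" if all: "\<forall>n. y \<in> U n" for y n
  proof -
    interpret M: Metric_space "fibre \<pi> y" d by (rule mb_ms[OF mb])
    have comp: "M.mcomplete" by (rule mb_complete[OF mb])
    have "M.MCauchy (\<lambda>n. c n y)"
      unfolding M.MCauchy_def
    proof (intro conjI allI impI)
      show "range (\<lambda>n. c n y) \<subseteq> fibre \<pi> y" using sec_pi[OF c(1)] unfolding fibre_def by auto
      fix \<epsilon> :: real assume e: "\<epsilon> > 0"
      obtain N where N: "1 / real (Suc N) < \<epsilon>" using reals_Archimedean[OF e] by (auto simp: inverse_eq_divide)
      show "\<exists>N. \<forall>n n'. N \<le> n \<longrightarrow> N \<le> n' \<longrightarrow> d (c n y) (c n' y) < \<epsilon>"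
      proof (intro exI allI impI)
        fix n n' assume "N \<le> n" "N \<le> n'"
        have "d (c n y) (c n' y) < 1 / real (Suc (min n n'))"
          using key2[OF all[rule_format, of "max n n'"]] by auto
        also have "\<dots> \<le> 1 / real (Suc N)" using \<open>N \<le> n\<close> \<open>N \<le> n'\<close>
          by (intro divide_left_mono) auto
        finally show "d (c n y) (c n' y) < \<epsilon>" using N by linarith
      qed
    qed
    then obtain l where "limitin M.mtopology (\<lambda>n. c n y) l sequentially"
      using comp unfolding M.mcomplete_def by blast
    then have lm: "limitin M.mtopology (\<lambda>n. c n y) l sequentially" "l \<in> fibre \<pi> y"
      using M.limitin_metric by auto
    have Ls: "L y \<in> fibre \<pi> y \<and> limitin M.mtopology (\<lambda>n. c n y) (L y) sequentially"
      unfolding L_def by (rule someI[of "\<lambda>l. l \<in> fibre \<pi> y \<and> limitin M.mtopology (\<lambda>n. c n y) l sequentially"]) (use lm in blast)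
    then have lim: "\<And>e. e > 0 \<Longrightarrow> \<exists>N. \<forall>m\<ge>N. c m y \<in> fibre \<pi> y \<and> d (c m y) (L y) < e"
      unfolding M.limit_metric_sequentially by blast
    have "d (L y) (c n y) \<le> 1 / real (Suc n)"
    proof (rule field_le_epsilon)
      fix e :: real assume e: "e > 0"
      obtain N where N: "\<forall>m\<ge>N. c m y \<in> fibre \<pi> y \<and> d (c m y) (L y) < e" using lim[OF e] by blast
      define m where "m = max N n"
      have "d (L y) (c n y) \<le> d (L y) (c m y) + d (c m y) (c n y)"
        using Ls sec_pi[OF c(1)] unfolding fibre_def by (intro mb_tri[OF mb]) auto
      moreover have "d (c m y) (L y) < e" using N unfolding m_def by auto
      moreover have "d (c n y) (c m y) < 1 / real (Suc n)"
        using key[OF all[rule_format, of m], of n m] unfolding m_def by auto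
      ultimately show "d (L y) (c n y) \<le> 1 / real (Suc n) + e"
        using mb_commute[OF mb, of "c m y" "L y"] mb_commute[OF mb, of "c m y" "c n y"] by linarith
    qed
    then show ?thesis using Ls by blast
  qed
  define N where "N y = (LEAST n. y \<notin> U (Suc n))" for y
  define b where "b y = (if \<forall>n. y \<in> U n then L y else c (N y) y)" for y
  have bs: "b \<in> sections \<pi>"
    unfolding sections_def mem_Collect_eq
  proof
    fix y show "\<pi> (b y) = y"
    proof (cases "\<forall>n. y \<in> U n")
      case True
      then have "L y \<in> fibre \<pi> y" using Lprop[OF True, of 0] by blast
      moreover have "b y = L y" unfolding b_def by (rule if_P[OF True])
      ultimately show ?thesis unfolding fibre_def by simp
    next
      case False
      have "b y = c (N y) y" unfolding b_def by (rule if_not_P[OF False])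
      then show ?thesis using sec_pi[OF c(1)] by simp
    qed
  qed
  have bclose: "d (b y) (c n y) \<le> 1 / real (Suc n)" if y: "y \<in> U n" for y n
  proof (cases "\<forall>n. y \<in> U n")
    case True
    have "b y = L y" unfolding b_def by (rule if_P[OF True])
    then show ?thesis using Lprop[OF True] by simp
  next
    case False
    then obtain m where m: "y \<notin> U m" by blast
    have "y \<in> U 0" using y Umono[of 0 n] by blast
    then have "m \<noteq> 0" using m by metis
    then obtain m' where "m = Suc m'" using not0_implies_Suc by blast
    then have ex: "y \<notin> U (Suc m')" using m by simp
    have NU: "y \<notin> U (Suc (N y))" unfolding N_def by (rule LeastI[of "\<lambda>n. y \<notin> U (Suc n)", OF ex])
    have nN: "n \<le> N y"
    proof (rule ccontr)
      assume "\<not> n \<le> N y"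
      then have "U n \<subseteq> U (Suc (N y))" using Umono by simp
      then show False using y NU by blast
    qed
    have yN: "y \<in> U (N y)"
    proof (cases "N y")
      case 0 then show ?thesis using y Umono[of 0 n] by auto
    next
      case (Suc j)
      have "\<not> (y \<notin> U (Suc j))" using not_less_Least[of j "\<lambda>n. y \<notin> U (Suc n)"] Suc unfolding N_def by simp
      then show ?thesis using Suc by simp
    qed
    have "d (c n y) (c (N y) y) < 1 / real (Suc n)" using key[OF yN nN] by simp
    moreover have "b y = c (N y) y" unfolding b_def by (rule if_not_P[OF False])
    ultimately show ?thesis using mb_commute[OF mb, of "c n y" "c (N y) y"] by simp
  qed
  have "tends b g"
    unfolding tends_def
  proof (intro allI impI)
    fix O' assume O': "open O' \<and> g \<in> O'"
    have "\<exists>V \<epsilon>. open V \<and> g \<in> V \<and> \<epsilon> > 0 \<and> V \<subseteq> thicken \<pi> d V \<epsilon> \<and> thicken \<pi> d V \<epsilon> \<subseteq> O'"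
      by (rule mb_thick[OF mb conjunct1[OF O'] conjunct2[OF O']])
    then obtain V \<delta> where V: "open V" "g \<in> V" "\<delta> > 0" "thicken \<pi> d V \<delta> \<subseteq> O'"
      by (elim exE conjE)
    have "\<exists>n. inverse (real (Suc n)) < \<delta>/2" by (rule reals_Archimedean) (use V(3) in simp)
    then obtain n where n0: "inverse (real (Suc n)) < \<delta>/2" by (elim exE)
    then have n: "1 / real (Suc n) < \<delta>/2" by (simp add: inverse_eq_divide)
    have VW: "open (V \<inter> W n)" "g \<in> V \<inter> W n" using V(1,2) Wo Wg by auto
    have "\<exists>c\<in>sections \<pi>. eventually (\<lambda>y. c y \<in> V \<inter> W n) \<mu>"
      by (rule sec_near[OF VW gx])
    then obtain e where e: "e \<in> sections \<pi>" "eventually (\<lambda>y. e y \<in> V \<inter> W n) \<mu>"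
      by (elim bexE)
    show "eventually (\<lambda>y. b y \<in> O') \<mu>"
    proof (rule eventually_elim2[OF Uev[of n] e(2)])
      fix y assume yU: "y \<in> U n" and ey: "e y \<in> V \<inter> W n"
      have "c n y \<in> W n" using yU unfolding U_def by simp
      then have g1: "c n y \<in> G n" using WG by blast
      have g2: "e y \<in> G n" using ey WG by blast
      have pe: "\<pi> (c n y) = y" "\<pi> (e y) = y" "\<pi> (b y) = y"
        using sec_pi[OF c(1)] sec_pi[OF e(1)] sec_pi[OF bs] by simp_all
      have t1: "d (c n y) (e y) < 1 / real (Suc n)"
        by (rule G(3)[OF g1 g2]) (simp add: pe)
      have t2: "d (b y) (e y) \<le> d (b y) (c n y) + d (c n y) (e y)"
        by (rule mb_tri[OF mb]) (simp_all add: pe)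
      have t3: "d (b y) (c n y) \<le> 1 / real (Suc n)" by (rule bclose[OF yU])
      have "d (b y) (e y) < \<delta>" using n t1 t2 t3 by linarith
      moreover have "e y \<in> V" using ey by blast
      moreover have "\<pi> (b y) = \<pi> (e y)" by (simp add: pe)
      ultimately have "b y \<in> thicken \<pi> d V \<delta>"
        unfolding thicken_def by blast
      then show "b y \<in> O'" using V(4) by blast
    qed
  qed
  then show ?thesis using bs by blast
qed

end

context
  fixes \<pi> :: "'e::topological_space \<Rightarrow> 'x::topological_space" and d :: "'e \<Rightarrow> 'e \<Rightarrow> real" and k :: real
    and \<mu> :: "'x filter" and x :: 'x
  assumes mb: "metric_bundle \<pi> d k" and uf: "ultrafilter \<mu>" and mux: "\<mu> \<le> nhds x"
begin

lemma main_result: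
  assumes fx: "f \<in> fibre \<pi> x"
  shows "(\<forall>W. open W \<and> f \<in> W \<longrightarrow> A_set \<pi> d \<mu> W \<noteq> {})
       \<and> (\<forall>W W'. open W \<and> f \<in> W \<and> open W' \<and> f \<in> W' \<longrightarrow>
             A_set \<pi> d \<mu> W \<inter> A_set \<pi> d \<mu> W' = A_set \<pi> d \<mu> (W \<inter> W'))
       \<and> cauchy_filter (udist d \<mu>) (A_filter \<pi> d \<mu> f)
       \<and> (\<exists>\<sigma>. (\<forall>g\<in>fibre \<pi> x. \<sigma> g \<in> ultraprod \<pi> d \<mu> \<and>
                   converges_to (udist d \<mu>) (A_filter \<pi> d \<mu> g) (\<sigma> g))
             \<and> (\<forall>g\<in>fibre \<pi> x. \<forall>h\<in>fibre \<pi> x. udist d \<mu> (\<sigma> g) (\<sigma> h) \<le> d g h))"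
proof (intro conjI allI impI)
  have gx: "\<pi> f = x" using fx unfolding fibre_def by simp
  fix W assume "open W \<and> f \<in> W"
  then show "A_set \<pi> d \<mu> W \<noteq> {}" using A_nonempty[OF mb uf mux _ _ gx] by blast
next
  fix W W' show "A_set \<pi> d \<mu> W \<inter> A_set \<pi> d \<mu> W' = A_set \<pi> d \<mu> (W \<inter> W')"
    by (rule A_inter[OF mb uf mux])
next
  have gx: "\<pi> f = x" using fx unfolding fibre_def by simp
  show "cauchy_filter (udist d \<mu>) (A_filter \<pi> d \<mu> f)" by (rule cauchy[OF mb uf mux gx])
next
  define B where "B g = (SOME b. b \<in> sections \<pi> \<and> tends \<mu> b g)" for g
  have Bp: "B g \<in> sections \<pi> \<and> tends \<mu> B' g" if "g \<in> fibre \<pi> x" "B' = B g" for g B'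
  proof -
    have gx: "\<pi> g = x" using that unfolding fibre_def by simp
    have "\<exists>b. b \<in> sections \<pi> \<and> tends \<mu> b g" using exist_sec[OF mb uf mux gx] by blast
    then have "B g \<in> sections \<pi> \<and> tends \<mu> (B g) g" unfolding B_def by (rule someI_ex)
    then show ?thesis using that by simp
  qed
  define \<sigma> where "\<sigma> g = {c \<in> sections \<pi>. ueq d \<mu> (B g) c}" for g
  show "\<exists>\<sigma>. (\<forall>g\<in>fibre \<pi> x. \<sigma> g \<in> ultraprod \<pi> d \<mu> \<and>
                   converges_to (udist d \<mu>) (A_filter \<pi> d \<mu> g) (\<sigma> g))
             \<and> (\<forall>g\<in>fibre \<pi> x. \<forall>h\<in>fibre \<pi> x. udist d \<mu> (\<sigma> g) (\<sigma> h) \<le> d g h)"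
  proof (intro exI[of _ \<sigma>] conjI ballI)
    fix g assume g: "g \<in> fibre \<pi> x"
    have gx: "\<pi> g = x" using g unfolding fibre_def by simp
    have b: "B g \<in> sections \<pi>" "tends \<mu> (B g) g" using Bp[OF g refl] by auto
    show "\<sigma> g \<in> ultraprod \<pi> d \<mu>" unfolding \<sigma>_def by (rule cls_mem[OF mb uf b(1)])
    show "converges_to (udist d \<mu>) (A_filter \<pi> d \<mu> g) (\<sigma> g)"
      unfolding \<sigma>_def by (rule conv_sec[OF mb uf mux gx b])
  next
    fix g h assume g: "g \<in> fibre \<pi> x" and h: "h \<in> fibre \<pi> x"
    have gh: "\<pi> g = \<pi> h" using g h unfolding fibre_def by simp
    have b: "B g \<in> sections \<pi>" "tends \<mu> (B g) g" using Bp[OF g refl] by auto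
    have b': "B h \<in> sections \<pi>" "tends \<mu> (B h) h" using Bp[OF h refl] by auto
    show "udist d \<mu> (\<sigma> g) (\<sigma> h) \<le> d g h"
      unfolding \<sigma>_def by (rule lip[OF mb uf mux gh b(1) b'(1) b(2) b'(2)])
  qed
qed

end

theorem theorem4p1:
  fixes \<pi> :: "'e::topological_space \<Rightarrow> 'x::t2_space"
    and d :: "'e \<Rightarrow> 'e \<Rightarrow> real" and k :: real
    and \<mu> :: "'x filter" and x :: 'x and f :: 'e
  assumes "compact (UNIV :: 'x set)"
    and "metric_bundle \<pi> d k"
    and "ultrafilter \<mu>" and "\<mu> \<le> nhds x"
    and "f \<in> fibre \<pi> x"
  shows "(\<forall>W. open W \<and> f \<in> W \<longrightarrow> A_set \<pi> d \<mu> W \<noteq> {})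
       \<and> (\<forall>W W'. open W \<and> f \<in> W \<and> open W' \<and> f \<in> W' \<longrightarrow>
             A_set \<pi> d \<mu> W \<inter> A_set \<pi> d \<mu> W' = A_set \<pi> d \<mu> (W \<inter> W'))
       \<and> cauchy_filter (udist d \<mu>) (A_filter \<pi> d \<mu> f)
       \<and> (\<exists>\<sigma>. (\<forall>g\<in>fibre \<pi> x. \<sigma> g \<in> ultraprod \<pi> d \<mu> \<and>
                   converges_to (udist d \<mu>) (A_filter \<pi> d \<mu> g) (\<sigma> g))
             \<and> (\<forall>g\<in>fibre \<pi> x. \<forall>h\<in>fibre \<pi> x. udist d \<mu> (\<sigma> g) (\<sigma> h) \<le> d g h))"
  by (rule main_result[OF assms(2) assms(3) assms(4) assms(5)])

end
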